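(* Let $n\ge 1$, $0\le w\le n$, and let $U$ be an $n$-qubit Clifford operator that is a product of Clifford operators each of which acts either trivially on the first $w$ qubits or only as the control of a CNOT on them; in particular its symplectic matrix $M\in\mathrm{Sp}(2n,\mathbb{F}_2)$ satisfies $f_iM=f_i$ for all $1\le i\le w$. Then there exist vectors $u_1,\dots,u_{2w}\in\mathbb{F}_2^{2n}$ such that $$M' := M\, S_{u_1} S_{u_2}\cdots S_{u_{2w}}$$ satisfies $e_iM'=e_i$ and $f_iM'=f_i$ for all $1\le i\le w$, and $bM'\in\mathrm{span}\{e_j,f_j : w<j\le n\}$ for every $b\in\{e_j,f_j: w<j\le n\}$. That is, $2w$ Pauli $\pi/4$ rotations suffice to turn $U$ into a Clifford operator (up to Pauli operators and phases) supported only on the last $n-w$ qubits.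
   Context: Paulis and Cliffords are represented in the binary symplectic formalism. An $n$-qubit Pauli operator is identified (up to phase) with a row vector $v\in\mathbb{F}_2^{2n}$ via $P_v=\prod_{i=1}^n X_i^{v_i}Z_i^{v_{n+i}}$. The symplectic form is $\langle u,v\rangle=uJv^T$ with $J=\begin{bmatrix}0&I_n\\ I_n&0\end{bmatrix}$; $P_u,P_v$ commute iff $\langle u,v\rangle=0$. Let $e_1,\dots,e_{2n}$ be the standard basis of $\mathbb{F}_2^{2n}$ and $f_k:=e_{n+k}$ ($e_k$ corresponds to $X_k$, $f_k$ to $Z_k$). A Clifford $U$ is represented (ignoring Pauli corrections and phases) by a matrix $M_U$ with $M_UJM_U^T=J$, acting by $v\mapsto vM_U$ (conjugation $P\mapsto UPU^\dagger$); its $i$-th row is the image of the $i$-th basis vector. The Pauli $\pi/4$ rotation $R_{\pi/4}(P_u)$ maps $P\mapsto PP_u$ if $P$ anticommutes with $P_u$ and fixes $P$ otherwise; in symplectic form it acts as the transvection $E_u(v)=v+\langle u,v\rangle u$, whose matrix (row-vector convention $v\mapsto vS_u$) is denoted $S_u$. *)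

theory Defs
  imports "Jordan_Normal_Form.VS_Connect" "HOL-Library.Z2"
begin

text \<open>Indices are 0-based:
  qubit k (0 \<le> k < n) corresponds to e_k = X_k (index k) and f_k = Z_k (index n+k)
  in F_2^{2n}. Row vectors are JNF vectors of dimension 2n; a matrix M acts on
  row vectors from the right, v \<mapsto> v M.\<close>

definition row_mult :: "bit vec \<Rightarrow> bit mat \<Rightarrow> bit vec" (infixl "\<^sub>r*" 70) where
  "v \<^sub>r* M = transpose_mat M *\<^sub>v v"

definition Jmat :: "nat \<Rightarrow> bit mat" where
  "Jmat n = four_block_mat (0\<^sub>m n n) (1\<^sub>m n) (1\<^sub>m n) (0\<^sub>m n n)"

definition symplectic :: "nat \<Rightarrow> bit mat \<Rightarrow> bool" where
  "symplectic n M \<longleftrightarrow> M \<in> carrier_mat (2*n) (2*n) \<and> M * Jmat n * transpose_mat M = Jmat n"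

definition symp_form :: "nat \<Rightarrow> bit vec \<Rightarrow> bit vec \<Rightarrow> bit" where
  "symp_form n u v = u \<bullet> (Jmat n *\<^sub>v v)"

definition e_vec :: "nat \<Rightarrow> nat \<Rightarrow> bit vec" where
  "e_vec n k = unit_vec (2*n) k"

definition f_vec :: "nat \<Rightarrow> nat \<Rightarrow> bit vec" where
  "f_vec n k = unit_vec (2*n) (n + k)"

text \<open>Transvection matrix S_u, i.e. the (row-convention) matrix of
  E_u(v) = v + <u,v> u, namely S_u = I + (J u^T) u.\<close>
definition transvection :: "nat \<Rightarrow> bit vec \<Rightarrow> bit mat" where
  "transvection n u = mat (2*n) (2*n) (\<lambda>(i,j). (if i = j then 1 else 0) + (Jmat n *\<^sub>v u) $ i * u $ j)"

abbreviation span_bit :: "nat \<Rightarrow> bit vec set \<Rightarrow> bit vec set" where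
  "span_bit N S \<equiv> LinearCombinations.module.span class_ring (module_vec TYPE(bit) N) S"

end

theory Submission
  imports Defs
begin

lemma bit_add_self[simp]: "(x::bit) + x = 0"
  by (cases x) simp_all

lemma Jmat_carrier[simp]: "Jmat n \<in> carrier_mat (2*n) (2*n)"
  unfolding Jmat_def by (auto simp: mult_2)

lemma Jmat_dims[simp]: "dim_row (Jmat n) = 2*n" "dim_col (Jmat n) = 2*n"
  using carrier_matD[OF Jmat_carrier[of n]] by auto

lemma Jmat_index: "i < 2*n \<Longrightarrow> j < 2*n \<Longrightarrow>
   Jmat n $$ (i,j) = (if j = (if i < n then n+i else i-n) then 1 else 0)"
  unfolding Jmat_def by (subst index_mat_four_block) auto

lemma Jmv: assumes v: "v \<in> carrier_vec (2*n)" and i: "i < 2*n"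
  shows "(Jmat n *\<^sub>v v) $ i = v $ (if i < n then n+i else i-n)"
proof -
  let ?s = "(if i < n then n+i else i-n)"
  have s: "?s \<in> {0..<2*n}" using i by auto
  have "(Jmat n *\<^sub>v v) $ i = row (Jmat n) i \<bullet> v"
    using i by (subst index_mult_mat_vec) auto
  also have "\<dots> = (\<Sum>j\<in>{0..<2*n}. row (Jmat n) i $ j * v $ j)"
    unfolding scalar_prod_def using v by simp
  also have "\<dots> = (\<Sum>j\<in>{0..<2*n}. Jmat n $$ (i,j) * v $ j)"
    by (rule sum.cong) (use i in auto)
  also have "\<dots> = (\<Sum>j\<in>{0..<2*n}. (if j = ?s then v $ j else 0))"
    by (rule sum.cong) (auto simp: Jmat_index i)
  also have "\<dots> = v $ ?s" using s by (simp add: sum.delta')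
  finally show ?thesis .
qed

lemma symp_formula: assumes u: "u \<in> carrier_vec (2*n)" and v: "v \<in> carrier_vec (2*n)"
  shows "symp_form n u v = (\<Sum>i<n. u$i * v$(n+i) + u$(n+i) * v$i)"
proof -
  have "dim_vec (Jmat n *\<^sub>v v) = 2*n" by simp
  then have "symp_form n u v = (\<Sum>i\<in>{0..<2*n}. u $ i * (Jmat n *\<^sub>v v) $ i)"
    unfolding symp_form_def scalar_prod_def by (simp only:)
  also have "\<dots> = (\<Sum>i\<in>{0..<2*n}. u $ i * v $ (if i < n then n+i else i-n))"
    by (intro sum.cong refl) (subst Jmv[OF v], auto)
  also have "\<dots> = (\<Sum>i\<in>{0..<n}. u $ i * v $ (if i < n then n+i else i-n))
     + (\<Sum>i\<in>{n..<n+n}. u $ i * v $ (if i < n then n+i else i-n))"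
    unfolding mult_2 by (rule sum.atLeastLessThan_concat[symmetric]) auto
  also have "(\<Sum>i\<in>{n..<n+n}. u $ i * v $ (if i < n then n+i else i-n)) = (\<Sum>i\<in>{0..<n}. u $ (n+i) * v $ i)"
    using sum.shift_bounds_nat_ivl[of "\<lambda>i. u $ i * v $ (if i < n then n+i else i-n)" 0 n n]
    by (simp add: add.commute)
  also have "(\<Sum>i\<in>{0..<n}. u $ i * v $ (if i < n then n+i else i-n)) = (\<Sum>i\<in>{0..<n}. u $ i * v $ (n+i))"
    by (rule sum.cong) auto
  finally show ?thesis by (simp only: sum.distrib atLeast0LessThan)
qed

lemma symp_sym: assumes u: "u \<in> carrier_vec (2*n)" and v: "v \<in> carrier_vec (2*n)"
  shows "symp_form n u v = symp_form n v u"
  unfolding symp_formula[OF u v] symp_formula[OF v u]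
  by (intro sum.cong refl) (simp only: ac_simps)

lemma symp_self: assumes u: "u \<in> carrier_vec (2*n)"
  shows "symp_form n u u = 0"
  unfolding symp_formula[OF u u]
  by (intro sum.neutral ballI) (metis bit_add_self mult.commute)

lemma symp_add_right: assumes u: "u \<in> carrier_vec (2*n)" and v: "v \<in> carrier_vec (2*n)"
  and w: "w \<in> carrier_vec (2*n)"
  shows "symp_form n u (v + w) = symp_form n u v + symp_form n u w"
proof -
  have vw: "v + w \<in> carrier_vec (2*n)" using v w by simp
  show ?thesis
    unfolding symp_formula[OF u vw] symp_formula[OF u v] symp_formula[OF u w] sum.distrib[symmetric]
  proof (intro sum.cong refl)
    fix i assume "i \<in> {..<n}"
    then have "(v+w)$i = v$i + w$i" "(v+w)$(n+i) = v$(n+i) + w$(n+i)" using v w by auto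
    then show "u $ i * (v + w) $ (n + i) + u $ (n + i) * (v + w) $ i =
         u $ i * v $ (n + i) + u $ (n + i) * v $ i + (u $ i * w $ (n + i) + u $ (n + i) * w $ i)"
      by (simp only: distrib_left distrib_right ac_simps)
  qed
qed

lemma symp_smult_right: assumes u: "u \<in> carrier_vec (2*n)" and v: "v \<in> carrier_vec (2*n)"
  shows "symp_form n u (c \<cdot>\<^sub>v v) = c * symp_form n u v"
proof -
  have cv: "c \<cdot>\<^sub>v v \<in> carrier_vec (2*n)" using v by simp
  show ?thesis
    unfolding symp_formula[OF u cv] symp_formula[OF u v] sum_distrib_left
  proof (intro sum.cong refl)
    fix i assume "i \<in> {..<n}"
    then have "(c \<cdot>\<^sub>v v)$i = c * v$i" "(c \<cdot>\<^sub>v v)$(n+i) = c * v$(n+i)" using v by auto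
    then show "u $ i * (c \<cdot>\<^sub>v v) $ (n + i) + u $ (n + i) * (c \<cdot>\<^sub>v v) $ i =
         c * (u $ i * v $ (n + i) + u $ (n + i) * v $ i)"
      by (simp only: distrib_left distrib_right ac_simps)
  qed
qed

lemma symp_zero_right: assumes u: "u \<in> carrier_vec (2*n)"
  shows "symp_form n u (0\<^sub>v (2*n)) = 0"
proof -
  have z: "0\<^sub>v (2*n) \<in> carrier_vec (2*n)" by simp
  show ?thesis unfolding symp_formula[OF u z] by (intro sum.neutral ballI) simp
qed

lemma symp_f: assumes v: "v \<in> carrier_vec (2*n)" and j: "j < n"
  shows "symp_form n v (f_vec n j) = v $ j"
proof -
  have f: "f_vec n j \<in> carrier_vec (2*n)" unfolding f_vec_def by simp
  have "symp_form n v (f_vec n j) = (\<Sum>i<n. (if i = j then v $ i else 0))"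
    unfolding symp_formula[OF v f]
    by (intro sum.cong refl) (use j in \<open>auto simp: f_vec_def\<close>)
  also have "\<dots> = v $ j" using j by (simp add: sum.delta')
  finally show ?thesis .
qed

lemma symp_e: assumes v: "v \<in> carrier_vec (2*n)" and j: "j < n"
  shows "symp_form n v (e_vec n j) = v $ (n+j)"
proof -
  have f: "e_vec n j \<in> carrier_vec (2*n)" unfolding e_vec_def by simp
  have "symp_form n v (e_vec n j) = (\<Sum>i<n. (if i = j then v $ (n+i) else 0))"
    unfolding symp_formula[OF v f]
    by (intro sum.cong refl) (use j in \<open>auto simp: e_vec_def\<close>)
  also have "\<dots> = v $ (n+j)" using j by (simp add: sum.delta')
  finally show ?thesis .
qed

lemma e_carrier[simp]: "e_vec n j \<in> carrier_vec (2*n)" unfolding e_vec_def by simp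
lemma f_carrier[simp]: "f_vec n j \<in> carrier_vec (2*n)" unfolding f_vec_def by simp

lemma e_index: "i < 2*n \<Longrightarrow> e_vec n j $ i = (if i = j then 1 else 0)"
  unfolding e_vec_def unit_vec_def by simp
lemma f_index: "i < 2*n \<Longrightarrow> f_vec n j $ i = (if i = n+j then 1 else 0)"
  unfolding f_vec_def unit_vec_def by simp

lemma vec_add_idx: "a \<in> carrier_vec m \<Longrightarrow> b \<in> carrier_vec m \<Longrightarrow> i < m \<Longrightarrow> (a+b)$i = a$i + b$i"
  by simp

lemma rmult_carrier[simp]: "N \<in> carrier_mat a b \<Longrightarrow> v \<in> carrier_vec a \<Longrightarrow> v \<^sub>r* N \<in> carrier_vec b"
  unfolding row_mult_def by simp

lemma rmult_mult: assumes "A \<in> carrier_mat a b" "B \<in> carrier_mat b c" "v \<in> carrier_vec a"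
  shows "v \<^sub>r* (A * B) = (v \<^sub>r* A) \<^sub>r* B"
  unfolding row_mult_def using assms by (simp add: transpose_mult[OF assms(1,2)])

lemma T_carrier[simp]: "transvection n u \<in> carrier_mat (2*n) (2*n)"
  unfolding transvection_def by simp

lemma T_dims[simp]: "dim_row (transvection n u) = 2*n" "dim_col (transvection n u) = 2*n"
  unfolding transvection_def by simp_all

lemma T_apply: assumes u: "u \<in> carrier_vec (2*n)" and v: "v \<in> carrier_vec (2*n)"
  shows "v \<^sub>r* transvection n u = v + symp_form n v u \<cdot>\<^sub>v u"
proof (rule eq_vecI)
  show "dim_vec (v \<^sub>r* transvection n u) = dim_vec (v + symp_form n v u \<cdot>\<^sub>v u)"
    using u v by (simp add: row_mult_def)
  fix j assume "j < dim_vec (v + symp_form n v u \<cdot>\<^sub>v u)"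
  then have j: "j < 2*n" using u by simp
  have dJu: "dim_vec (Jmat n *\<^sub>v u) = 2*n" by simp
  have s1: "(v \<^sub>r* transvection n u) $ j = row (transpose_mat (transvection n u)) j \<bullet> v"
    unfolding row_mult_def using j by (subst index_mult_mat_vec) auto
  have s2: "row (transpose_mat (transvection n u)) j \<bullet> v = (\<Sum>i\<in>{0..<2*n}. row (transpose_mat (transvection n u)) j $ i * v $ i)"
    unfolding scalar_prod_def using v by (simp only: carrier_vecD)
  have s3: "(\<Sum>i\<in>{0..<2*n}. row (transpose_mat (transvection n u)) j $ i * v $ i) = (\<Sum>i\<in>{0..<2*n}. (if i = j then v $ i else 0) + u $ j * (v $ i * (Jmat n *\<^sub>v u) $ i))"
  proof (intro sum.cong refl)
    fix i assume i: "i \<in> {0..<2*n}"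
    have r: "row (transpose_mat (transvection n u)) j $ i = (if i = j then 1 else 0) + (Jmat n *\<^sub>v u) $ i * u $ j"
      using i j by (simp add: transvection_def)
    have q: "(if i = j then 1 else 0) * v $ i = (if i = j then v $ i else 0)" by simp
    show "row (transpose_mat (transvection n u)) j $ i * v $ i = (if i = j then v $ i else 0) + u $ j * (v $ i * (Jmat n *\<^sub>v u) $ i)"
      unfolding r distrib_right q by (simp only: ac_simps)
  qed
  have s4: "(\<Sum>i\<in>{0..<2*n}. (if i = j then v $ i else 0) + u $ j * (v $ i * (Jmat n *\<^sub>v u) $ i)) = (\<Sum>i\<in>{0..<2*n}. (if i = j then v $ i else 0)) + u $ j * (\<Sum>i\<in>{0..<2*n}. v $ i * (Jmat n *\<^sub>v u) $ i)"
    by (simp only: sum.distrib sum_distrib_left)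
  have s5: "(\<Sum>i\<in>{0..<2*n}. (if i = j then v $ i else 0)) = v $ j"
    using j by (simp add: sum.delta')
  have s6: "(\<Sum>i\<in>{0..<2*n}. v $ i * (Jmat n *\<^sub>v u) $ i) = symp_form n v u"
    unfolding symp_form_def scalar_prod_def dJu ..
  have s7: "(v + symp_form n v u \<cdot>\<^sub>v u) $ j = v $ j + symp_form n v u * u $ j"
    using j u v by simp
  show "(v \<^sub>r* transvection n u) $ j = (v + symp_form n v u \<cdot>\<^sub>v u) $ j"
    unfolding s1 s2 s3 s4 s5 s6 s7 by (simp only: mult.commute)
qed


lemma T_fix: assumes u: "u \<in> carrier_vec (2*n)" and v: "v \<in> carrier_vec (2*n)"
  and z: "symp_form n v u = 0"
  shows "v \<^sub>r* transvection n u = v"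
  unfolding T_apply[OF u v] z using u v by (intro eq_vecI) auto

lemma T_pres: assumes u: "u \<in> carrier_vec (2*n)" and v: "v \<in> carrier_vec (2*n)"
  and w: "w \<in> carrier_vec (2*n)"
  shows "symp_form n (v \<^sub>r* transvection n u) (w \<^sub>r* transvection n u) = symp_form n v w"
proof -
  define a where "a = symp_form n v u"
  define b where "b = symp_form n w u"
  have au: "a \<cdot>\<^sub>v u \<in> carrier_vec (2*n)" "b \<cdot>\<^sub>v u \<in> carrier_vec (2*n)" using u by auto
  have x: "v + a \<cdot>\<^sub>v u \<in> carrier_vec (2*n)" using u v by auto
  have e1: "symp_form n (v + a \<cdot>\<^sub>v u) (w + b \<cdot>\<^sub>v u)
      = symp_form n (v + a \<cdot>\<^sub>v u) w + b * symp_form n (v + a \<cdot>\<^sub>v u) u"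
    by (simp only: symp_add_right[OF x w au(2)] symp_smult_right[OF x u])
  have e2: "symp_form n (v + a \<cdot>\<^sub>v u) w = symp_form n w v + a * b"
    by (simp only: symp_sym[OF x w] symp_add_right[OF w v au(1)] symp_smult_right[OF w u] b_def[symmetric])
  have e3: "symp_form n (v + a \<cdot>\<^sub>v u) u = a"
    by (simp only: symp_sym[OF x u] symp_add_right[OF u v au(1)] symp_smult_right[OF u u] symp_self[OF u]
      symp_sym[OF u v] a_def[symmetric] mult_zero_right add_0_right)
  have e4: "a * b + b * a = 0" by (metis bit_add_self mult.commute)
  have "symp_form n (v + a \<cdot>\<^sub>v u) (w + b \<cdot>\<^sub>v u) = symp_form n w v + (a * b + b * a)"
    unfolding e1 e2 e3 by (simp only: ac_simps)
  also have "\<dots> = symp_form n v w" unfolding e4 add_0_right by (rule symp_sym[OF w v])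
  finally show ?thesis unfolding T_apply[OF u v] T_apply[OF u w] a_def[symmetric] b_def[symmetric] .
qed

lemma sympl_pres: assumes M: "symplectic n M" and u: "u \<in> carrier_vec (2*n)"
  and v: "v \<in> carrier_vec (2*n)"
  shows "symp_form n (u \<^sub>r* M) (v \<^sub>r* M) = symp_form n u v"
proof -
  have Mc: "M \<in> carrier_mat (2*n) (2*n)" and MJ: "M * Jmat n * transpose_mat M = Jmat n"
    using M unfolding symplectic_def by auto
  have Mt: "transpose_mat M \<in> carrier_mat (2*n) (2*n)" using Mc by simp
  have y: "transpose_mat M *\<^sub>v v \<in> carrier_vec (2*n)" using Mt v by (rule mult_mat_vec_carrier)
  have x: "Jmat n *\<^sub>v (transpose_mat M *\<^sub>v v) \<in> carrier_vec (2*n)" using Jmat_carrier y by (rule mult_mat_vec_carrier)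
  have MJc: "M * Jmat n \<in> carrier_mat (2*n) (2*n)" using Mc Jmat_carrier by (rule mult_carrier_mat)
  have "symp_form n (u \<^sub>r* M) (v \<^sub>r* M) = u \<bullet> (M *\<^sub>v (Jmat n *\<^sub>v (transpose_mat M *\<^sub>v v)))"
    unfolding symp_form_def row_mult_def by (rule transpose_vec_mult_scalar[OF Mc x u])
  also have "M *\<^sub>v (Jmat n *\<^sub>v (transpose_mat M *\<^sub>v v)) = (M * Jmat n * transpose_mat M) *\<^sub>v v"
    unfolding assoc_mult_mat_vec[OF MJc Mt v] assoc_mult_mat_vec[OF Mc Jmat_carrier y] ..
  finally show ?thesis unfolding MJ symp_form_def .
qed

definition inv_at :: "nat \<Rightarrow> nat \<Rightarrow> nat \<Rightarrow> bit mat \<Rightarrow> bool" where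
  "inv_at n w k N \<longleftrightarrow> N \<in> carrier_mat (2*n) (2*n) \<and>
     (\<forall>x\<in>carrier_vec (2*n). \<forall>y\<in>carrier_vec (2*n). symp_form n (x \<^sub>r* N) (y \<^sub>r* N) = symp_form n x y) \<and>
     (\<forall>i<w. f_vec n i \<^sub>r* N = f_vec n i) \<and> (\<forall>i<k. e_vec n i \<^sub>r* N = e_vec n i)"

lemma inv_mult_T: assumes I: "inv_at n w k N" and u: "u \<in> carrier_vec (2*n)"
  shows "N * transvection n u \<in> carrier_mat (2*n) (2*n)"
    and "\<And>x :: bit vec. x \<in> carrier_vec (2*n) \<Longrightarrow> x \<^sub>r* (N * transvection n u) = (x \<^sub>r* N) \<^sub>r* transvection n u"
    and "\<forall>x\<in>carrier_vec (2*n). \<forall>y\<in>carrier_vec (2*n). symp_form n (x \<^sub>r* (N * transvection n u)) (y \<^sub>r* (N * transvection n u)) = symp_form n x y"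
proof -
  have Nc: "N \<in> carrier_mat (2*n) (2*n)" using I unfolding inv_at_def by auto
  show "N * transvection n u \<in> carrier_mat (2*n) (2*n)" using Nc T_carrier by (rule mult_carrier_mat)
  show r: "\<And>x :: bit vec. x \<in> carrier_vec (2*n) \<Longrightarrow> x \<^sub>r* (N * transvection n u) = (x \<^sub>r* N) \<^sub>r* transvection n u"
    by (rule rmult_mult[OF Nc T_carrier])
  show "\<forall>x\<in>carrier_vec (2*n). \<forall>y\<in>carrier_vec (2*n). symp_form n (x \<^sub>r* (N * transvection n u)) (y \<^sub>r* (N * transvection n u)) = symp_form n x y"
  proof (intro ballI)
    fix x y :: "bit vec" assume x: "x \<in> carrier_vec (2*n)" and y: "y \<in> carrier_vec (2*n)"
    have xN: "x \<^sub>r* N \<in> carrier_vec (2*n)" and yN: "y \<^sub>r* N \<in> carrier_vec (2*n)"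
      using Nc x y by auto
    show "symp_form n (x \<^sub>r* (N * transvection n u)) (y \<^sub>r* (N * transvection n u)) = symp_form n x y"
      unfolding r[OF x] r[OF y] T_pres[OF u xN yN] using I x y unfolding inv_at_def by blast
  qed
qed

lemma step: assumes I: "inv_at n w k N" and k: "k < w" and wn: "w \<le> n"
  shows "\<exists>u1 u2. u1 \<in> carrier_vec (2*n) \<and> u2 \<in> carrier_vec (2*n) \<and>
    inv_at n w (Suc k) (N * transvection n u1 * transvection n u2)"
proof -
  have Nc: "N \<in> carrier_mat (2*n) (2*n)" using I unfolding inv_at_def by auto
  have pres: "\<And>x y. x \<in> carrier_vec (2*n) \<Longrightarrow> y \<in> carrier_vec (2*n) \<Longrightarrow>
     symp_form n (x \<^sub>r* N) (y \<^sub>r* N) = symp_form n x y" using I unfolding inv_at_def by blast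
  have fN: "\<And>i. i < w \<Longrightarrow> f_vec n i \<^sub>r* N = f_vec n i" using I unfolding inv_at_def by blast
  have eN: "\<And>i. i < k \<Longrightarrow> e_vec n i \<^sub>r* N = e_vec n i" using I unfolding inv_at_def by blast
  have kn: "k < n" using k wn by simp
  define x where "x = e_vec n k \<^sub>r* N"
  have xc: "x \<in> carrier_vec (2*n)" unfolding x_def using Nc by simp
  have xa: "x $ j = (if j = k then 1 else 0)" if j: "j < w" for j
  proof -
    have "x $ j = symp_form n x (f_vec n j)" using symp_f[OF xc] j wn by simp
    also have "\<dots> = symp_form n (e_vec n k) (f_vec n j)" unfolding x_def
      using pres[of "e_vec n k" "f_vec n j"] fN[OF j] by simp
    also have "\<dots> = e_vec n k $ j" using symp_f j wn by simp
    finally show ?thesis using j wn by (simp add: e_index)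
  qed
  have xb: "x $ (n+j) = 0" if j: "j < k" for j
  proof -
    have "x $ (n+j) = symp_form n x (e_vec n j)" using symp_e[OF xc] j kn by simp
    also have "\<dots> = symp_form n (e_vec n k) (e_vec n j)" unfolding x_def
      using pres[of "e_vec n k" "e_vec n j"] eN[OF j] by simp
    also have "\<dots> = e_vec n k $ (n+j)" using symp_e j kn by simp
    finally show ?thesis using j kn by (simp add: e_index)
  qed
  define u1 where "u1 = (if x $ (n+k) = 1 then 0\<^sub>v (2*n) else f_vec n k)"
  have u1c: "u1 \<in> carrier_vec (2*n)" unfolding u1_def by simp
  define x1 where "x1 = x \<^sub>r* transvection n u1"
  have x1c: "x1 \<in> carrier_vec (2*n)" unfolding x1_def by (rule rmult_carrier[OF T_carrier xc])
  have u1f: "symp_form n (f_vec n j) u1 = 0" if "j < w" for j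
    unfolding u1_def using symp_zero_right[of "f_vec n j" n] symp_f[of "f_vec n j" n k] kn
    by (auto simp: f_index)
  have u1e: "symp_form n (e_vec n j) u1 = 0" if "j < k" for j
    unfolding u1_def using symp_zero_right[of "e_vec n j" n] symp_f[of "e_vec n j" n k] kn that
    by (auto simp: e_index)
  have x1eq: "x1 = (if x $ (n+k) = 1 then x else x + f_vec n k)"
  proof (cases "x $ (n+k) = 1")
    case True
    then show ?thesis unfolding x1_def u1_def using T_fix[OF _ xc symp_zero_right[OF xc]] by simp
  next
    case False
    then show ?thesis unfolding x1_def u1_def using T_apply[OF _ xc, of "f_vec n k"]
      symp_f[OF xc kn] xa[OF k] by simp
  qed
  have x1a: "x1 $ j = (if j = k then 1 else 0)" if j: "j < w" for j
    using xa[OF j] j wn xc kn unfolding x1eq by (auto simp: f_index vec_add_idx[OF xc f_carrier])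
  have x1b: "x1 $ (n+j) = (if j = k then 1 else 0)" if j: "j \<le> k" for j
  proof (cases "j = k")
    case True
    then show ?thesis using kn xc unfolding x1eq by (auto simp: f_index vec_add_idx[OF xc f_carrier])
  next
    case False
    then have "j < k" using j by simp
    then show ?thesis using xb[of j] kn xc False unfolding x1eq by (auto simp: f_index vec_add_idx[OF xc f_carrier])
  qed
  define u2 where "u2 = x1 + e_vec n k"
  have u2c: "u2 \<in> carrier_vec (2*n)" unfolding u2_def using x1c by simp
  have u2f: "symp_form n (f_vec n j) u2 = 0" if j: "j < w" for j
  proof -
    have "symp_form n (f_vec n j) u2 = u2 $ j" using symp_sym[OF f_carrier u2c] symp_f[OF u2c] j wn by simp
    also have "\<dots> = 0" unfolding u2_def using x1c j wn x1a[OF j] k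
      by (cases "j = k") (auto simp: vec_add_idx[OF x1c e_carrier] e_index)
    finally show ?thesis .
  qed
  have u2e: "symp_form n (e_vec n j) u2 = 0" if j: "j < k" for j
  proof -
    have "symp_form n (e_vec n j) u2 = u2 $ (n+j)" using symp_sym[OF e_carrier u2c] symp_e[OF u2c] j kn by simp
    also have "\<dots> = 0" unfolding u2_def using x1c j kn x1b[of j] k
      by (auto simp: vec_add_idx[OF x1c e_carrier] e_index)
    finally show ?thesis .
  qed
  have x1u2: "symp_form n x1 u2 = 1"
    unfolding u2_def symp_add_right[OF x1c x1c e_carrier] symp_self[OF x1c] symp_e[OF x1c kn]
    using x1b[of k] by simp
  have x2: "x1 \<^sub>r* transvection n u2 = e_vec n k"
  proof -
    have "x1 \<^sub>r* transvection n u2 = x1 + 1 \<cdot>\<^sub>v u2" using T_apply[OF u2c x1c] x1u2 by simp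
    also have "\<dots> = e_vec n k" unfolding u2_def
      by (rule eq_vecI) (use x1c in \<open>auto simp: e_index\<close>)
    finally show ?thesis .
  qed
  define N' where "N' = N * transvection n u1 * transvection n u2"
  have N1c: "N * transvection n u1 \<in> carrier_mat (2*n) (2*n)" using Nc T_carrier by (rule mult_carrier_mat)
  have N'c: "N' \<in> carrier_mat (2*n) (2*n)" unfolding N'_def using N1c T_carrier by (rule mult_carrier_mat)
  have rN': "y \<^sub>r* N' = ((y \<^sub>r* N) \<^sub>r* transvection n u1) \<^sub>r* transvection n u2"
    if y: "y \<in> carrier_vec (2*n)" for y
    unfolding N'_def rmult_mult[OF N1c T_carrier y] rmult_mult[OF Nc T_carrier y] ..
  have "inv_at n w (Suc k) N'"
    unfolding inv_at_def
  proof (intro conjI ballI allI impI)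
    show "N' \<in> carrier_mat (2*n) (2*n)" by fact
    fix y z :: "bit vec" assume y: "y \<in> carrier_vec (2*n)" and z: "z \<in> carrier_vec (2*n)"
    have yN: "y \<^sub>r* N \<in> carrier_vec (2*n)" "z \<^sub>r* N \<in> carrier_vec (2*n)" using Nc y z by auto
    have yN1: "(y \<^sub>r* N) \<^sub>r* transvection n u1 \<in> carrier_vec (2*n)"
         "(z \<^sub>r* N) \<^sub>r* transvection n u1 \<in> carrier_vec (2*n)"
      using rmult_carrier[OF T_carrier yN(1)] rmult_carrier[OF T_carrier yN(2)] by auto
    show "symp_form n (y \<^sub>r* N') (z \<^sub>r* N') = symp_form n y z"
      unfolding rN'[OF y] rN'[OF z] T_pres[OF u2c yN1] T_pres[OF u1c yN] pres[OF y z] ..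
  next
    fix i assume i: "i < w"
    have "f_vec n i \<^sub>r* N' = (f_vec n i \<^sub>r* transvection n u1) \<^sub>r* transvection n u2"
      unfolding rN'[OF f_carrier] fN[OF i] ..
    also have "\<dots> = f_vec n i"
      unfolding T_fix[OF u1c f_carrier u1f[OF i]] T_fix[OF u2c f_carrier u2f[OF i]] ..
    finally show "f_vec n i \<^sub>r* N' = f_vec n i" .
  next
    fix i assume i: "i < Suc k"
    show "e_vec n i \<^sub>r* N' = e_vec n i"
    proof (cases "i = k")
      case True
      show ?thesis unfolding True rN'[OF e_carrier] x_def[symmetric] x1_def[symmetric] x2 ..
    next
      case False
      then have i: "i < k" using i by simp
      have "e_vec n i \<^sub>r* N' = (e_vec n i \<^sub>r* transvection n u1) \<^sub>r* transvection n u2"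
        unfolding rN'[OF e_carrier] eN[OF i] ..
      also have "\<dots> = e_vec n i"
        unfolding T_fix[OF u1c e_carrier u1e[OF i]] T_fix[OF u2c e_carrier u2e[OF i]] ..
      finally show ?thesis .
    qed
  qed
  then show ?thesis using u1c u2c unfolding N'_def by blast
qed

lemma iter: assumes M: "symplectic n M" and fM: "\<forall>i<w. f_vec n i \<^sub>r* M = f_vec n i" and wn: "w \<le> n"
  shows "k \<le> w \<Longrightarrow> \<exists>us. length us = 2*k \<and> (\<forall>u\<in>set us. u \<in> carrier_vec (2*n)) \<and>
     inv_at n w k (foldl (*) M (map (transvection n) us))"
proof (induction k)
  case 0
  have "inv_at n w 0 M" unfolding inv_at_def using M fM sympl_pres[OF M]
    unfolding symplectic_def by auto
  then show ?case by (intro exI[of _ "[]"]) simp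
next
  case (Suc k)
  then obtain us where us: "length us = 2*k" "\<forall>u\<in>set us. u \<in> carrier_vec (2*n)"
    "inv_at n w k (foldl (*) M (map (transvection n) us))" by auto
  obtain u1 u2 where u: "u1 \<in> carrier_vec (2*n)" "u2 \<in> carrier_vec (2*n)"
    "inv_at n w (Suc k) (foldl (*) M (map (transvection n) us) * transvection n u1 * transvection n u2)"
    using step[OF us(3) _ wn] Suc.prems by auto
  show ?case
    by (rule exI[of _ "us @ [u1, u2]"]) (use us u in simp)
qed

lemma span_lemma: assumes y: "y \<in> carrier_vec (2*n)" and wn: "w \<le> n"
  and z: "\<forall>i<w. y $ i = 0 \<and> y $ (n+i) = 0"
  shows "y \<in> span_bit (2*n) ({e_vec n j | j. w \<le> j \<and> j < n} \<union> {f_vec n j | j. w \<le> j \<and> j < n})"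
proof -
  interpret V: vec_space "TYPE(bit)" "2*n" .
  define K where "K = {w..<n} \<union> {n+w..<n+n}"
  define S where "S = {e_vec n j | j. w \<le> j \<and> j < n} \<union> {f_vec n j | j. w \<le> j \<and> j < n}"
  have SK: "S = (\<lambda>k. unit_vec (2*n) k) ` K"
  proof
    show "S \<subseteq> (\<lambda>k. unit_vec (2*n) k) ` K"
      unfolding S_def K_def e_vec_def f_vec_def by auto
    show "(\<lambda>k. unit_vec (2*n) k) ` K \<subseteq> S"
    proof
      fix x :: "bit vec" assume "x \<in> (\<lambda>k. unit_vec (2*n) k) ` K"
      then obtain k where k: "k \<in> K" "x = unit_vec (2*n) k" by auto
      show "x \<in> S"
      proof (cases "k < n")
        case True
        then show ?thesis using k unfolding S_def K_def e_vec_def by auto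
      next
        case False
        then have "x = f_vec n (k - n)" "w \<le> k - n" "k - n < n" using k unfolding K_def f_vec_def by auto
        then show ?thesis unfolding S_def by blast
      qed
    qed
  qed
  have Kb: "\<And>k. k \<in> K \<Longrightarrow> k < 2*n" unfolding K_def by auto
  have inj: "inj_on (\<lambda>k. unit_vec (2*n) k :: bit vec) K"
  proof (rule inj_onI)
    fix a b assume a: "a \<in> K" and b: "b \<in> K" and e: "unit_vec (2*n) a = (unit_vec (2*n) b :: bit vec)"
    have "unit_vec (2*n) a $ a = (unit_vec (2*n) b :: bit vec) $ a" using e by (simp only:)
    then show "a = b" using Kb[OF a] Kb[OF b] by (auto split: if_splits)
  qed
  have fin: "finite S" unfolding SK K_def by simp
  have sub: "S \<subseteq> carrier_vec (2*n)" unfolding SK by auto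
  define a where "a = (\<lambda>x. y \<bullet> x)"
  have "y = V.lincomb a S"
  proof (rule eq_vecI)
    show "dim_vec y = dim_vec (V.lincomb a S)" using V.lincomb_dim[OF fin sub] y by simp
    fix i assume "i < dim_vec (V.lincomb a S)"
    then have i: "i < 2*n" using V.lincomb_dim[OF fin sub] by simp
    have "V.lincomb a S $ i = (\<Sum>x\<in>S. a x * x $ i)" by (rule V.lincomb_index[OF i sub])
    also have "\<dots> = (\<Sum>k\<in>K. a (unit_vec (2*n) k) * unit_vec (2*n) k $ i)"
      unfolding SK by (rule sum.reindex[OF inj, unfolded comp_def])
    also have "\<dots> = (\<Sum>k\<in>K. (if k = i then y $ i else 0))"
      by (intro sum.cong refl) (use Kb i in \<open>auto simp: a_def\<close>)
    also have "\<dots> = y $ i"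
    proof (cases "i \<in> K")
      case True
      then show ?thesis unfolding K_def by (simp add: sum.delta')
    next
      case False
      then have "i < w \<or> (n \<le> i \<and> i - n < w)" using i unfolding K_def by auto
      then have "y $ i = 0" using z by (metis le_add_diff_inverse)
      then show ?thesis using False unfolding K_def by (simp add: sum.delta')
    qed
    finally show "y $ i = V.lincomb a S $ i" by simp
  qed
  then show ?thesis unfolding S_def[symmetric] V.span_def using fin
    by (auto intro!: exI[of _ a] exI[of _ S])
qed

theorem lemmaA2:
  fixes n w :: nat and M :: "bit mat"
  assumes "1 \<le> n" and "w \<le> n"
    and "symplectic n M"
    and "\<forall>i<w. f_vec n i \<^sub>r* M = f_vec n i"
  shows "\<exists>us :: bit vec list. length us = 2*w \<and> (\<forall>u\<in>set us. u \<in> carrier_vec (2*n)) \<and>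
    (let M' = foldl (*) M (map (transvection n) us) in
      (\<forall>i<w. e_vec n i \<^sub>r* M' = e_vec n i \<and> f_vec n i \<^sub>r* M' = f_vec n i) \<and>
      (\<forall>b\<in>{e_vec n j | j. w \<le> j \<and> j < n} \<union> {f_vec n j | j. w \<le> j \<and> j < n}.
         b \<^sub>r* M' \<in> span_bit (2*n) ({e_vec n j | j. w \<le> j \<and> j < n} \<union> {f_vec n j | j. w \<le> j \<and> j < n})))"
proof -
  obtain us where us: "length us = 2*w" "\<forall>u\<in>set us. u \<in> carrier_vec (2*n)"
    "inv_at n w w (foldl (*) M (map (transvection n) us))"
    using iter[OF assms(3) assms(4) assms(2) le_refl] by blast
  define M' where "M' = foldl (*) M (map (transvection n) us)"
  have I: "inv_at n w w M'" using us(3) unfolding M'_def .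
  have Mc: "M' \<in> carrier_mat (2*n) (2*n)" using I unfolding inv_at_def by auto
  have pres: "\<And>x y. x \<in> carrier_vec (2*n) \<Longrightarrow> y \<in> carrier_vec (2*n) \<Longrightarrow>
     symp_form n (x \<^sub>r* M') (y \<^sub>r* M') = symp_form n x y" using I unfolding inv_at_def by blast
  have fM: "\<And>i. i < w \<Longrightarrow> f_vec n i \<^sub>r* M' = f_vec n i" using I unfolding inv_at_def by blast
  have eM: "\<And>i. i < w \<Longrightarrow> e_vec n i \<^sub>r* M' = e_vec n i" using I unfolding inv_at_def by blast
  have last: "b \<^sub>r* M' \<in> span_bit (2*n) ({e_vec n j | j. w \<le> j \<and> j < n} \<union> {f_vec n j | j. w \<le> j \<and> j < n})"
    if b: "b \<in> {e_vec n j | j. w \<le> j \<and> j < n} \<union> {f_vec n j | j. w \<le> j \<and> j < n}" for b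
  proof -
    have bc: "b \<in> carrier_vec (2*n)" using b by auto
    have b0: "b $ i = 0 \<and> b $ (n+i) = 0" if i: "i < w" for i
      using b i by (auto simp: e_index f_index)
    have yc: "b \<^sub>r* M' \<in> carrier_vec (2*n)" using Mc bc by simp
    show ?thesis
    proof (rule span_lemma[OF yc assms(2)], intro allI impI conjI)
      fix i assume i: "i < w"
      have "(b \<^sub>r* M') $ i = symp_form n (b \<^sub>r* M') (f_vec n i \<^sub>r* M')"
        unfolding fM[OF i] using symp_f[OF yc, of i] i assms(2) by simp
      also have "\<dots> = b $ i" using pres[OF bc f_carrier] symp_f[OF bc, of i] i assms(2) by simp
      finally show "(b \<^sub>r* M') $ i = 0" using b0[OF i] by simp
      have "(b \<^sub>r* M') $ (n+i) = symp_form n (b \<^sub>r* M') (e_vec n i \<^sub>r* M')"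
        unfolding eM[OF i] using symp_e[OF yc, of i] i assms(2) by simp
      also have "\<dots> = b $ (n+i)" using pres[OF bc e_carrier] symp_e[OF bc, of i] i assms(2) by simp
      finally show "(b \<^sub>r* M') $ (n+i) = 0" using b0[OF i] by simp
    qed
  qed
  show ?thesis
    by (rule exI[of _ us]) (use us(1,2) fM eM last in \<open>auto simp: Let_def M'_def[symmetric]\<close>)
qed

end
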